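(* $\mathcal C_q^{\infty,\infty,4,3}\neq\mathcal C_{qs}^{\infty,\infty,4,3}$.
   Context: A strategy: Hilbert spaces $\mathcal H_A,\mathcal H_B$ (possibly infinite-dimensional), a unit vector $|\psi\rangle\in\mathcal H_A\otimes\mathcal H_B$, and for each question a projective measurement $\{A^a_x\}_{a}$ on $\mathcal H_A$, $\{B^b_y\}_{b}$ on $\mathcal H_B$, producing $p(a,b|x,y)=\langle\psi|A^a_x\otimes B^b_y|\psi\rangle$. $\mathcal C_{qs}^{\infty,\infty,4,3}$ is the set of correlations with countably infinite question sets and answer sets of sizes 4 (Alice) and 3 (Bob) produced by some strategy; $\mathcal C_{q}^{\infty,\infty,4,3}$ is the subset produced by strategies whose state $|\psi\rangle$ has finite Schmidt rank. *)

theory Defs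
  imports "HOL-Analysis.Analysis"
begin

text \<open>Concrete model: every Hilbert space relevant here is realised as l2 over a countable
index type (nat for each party, nat \<times> nat for the tensor product).\<close>

definition l2 :: "('i \<Rightarrow> complex) set" where
  "l2 = {f. (\<lambda>i. (cmod (f i))\<^sup>2) summable_on UNIV}"

definition sqnorm :: "('i \<Rightarrow> complex) \<Rightarrow> real" where
  "sqnorm f = infsum (\<lambda>i. (cmod (f i))\<^sup>2) UNIV"

definition ip :: "('i \<Rightarrow> complex) \<Rightarrow> ('i \<Rightarrow> complex) \<Rightarrow> complex" where
  "ip f g = infsum (\<lambda>i. cnj (f i) * g i) UNIV"

type_synonym vec = "nat \<Rightarrow> complex"
type_synonym op = "vec \<Rightarrow> vec"

definition is_bounded_op :: "op \<Rightarrow> bool" where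
  "is_bounded_op T \<longleftrightarrow>
     (\<forall>f\<in>l2. T f \<in> l2) \<and>
     (\<forall>f\<in>l2. \<forall>g\<in>l2. T (\<lambda>i. f i + g i) = (\<lambda>i. T f i + T g i)) \<and>
     (\<forall>f\<in>l2. \<forall>c. T (\<lambda>i. c * f i) = (\<lambda>i. c * T f i)) \<and>
     (\<exists>C. \<forall>f\<in>l2. sqnorm (T f) \<le> C * sqnorm f)"

definition is_projection :: "op \<Rightarrow> bool" where
  "is_projection P \<longleftrightarrow> is_bounded_op P \<and>
     (\<forall>f\<in>l2. P (P f) = P f) \<and>
     (\<forall>f\<in>l2. \<forall>g\<in>l2. ip (P f) g = ip f (P g))"

definition is_PVM :: "nat \<Rightarrow> (nat \<Rightarrow> op) \<Rightarrow> bool" where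
  "is_PVM k P \<longleftrightarrow> (\<forall>a<k. is_projection (P a)) \<and>
     (\<forall>f\<in>l2. (\<lambda>i. \<Sum>a<k. P a f i) = f)"

text \<open>Action of A \<otimes> B on a vector of l2(nat \<times> nat) = l2(nat) \<otimes> l2(nat).\<close>
definition tens_apply :: "op \<Rightarrow> op \<Rightarrow> (nat \<times> nat \<Rightarrow> complex) \<Rightarrow> (nat \<times> nat \<Rightarrow> complex)" where
  "tens_apply A B \<psi> =
     (\<lambda>(i, j). A (\<lambda>i'. B (\<lambda>j'. \<psi> (i', j')) j) i)"

definition is_state :: "(nat \<times> nat \<Rightarrow> complex) \<Rightarrow> bool" where
  "is_state \<psi> \<longleftrightarrow> \<psi> \<in> l2 \<and> sqnorm \<psi> = 1"

definition finite_schmidt_rank :: "(nat \<times> nat \<Rightarrow> complex) \<Rightarrow> bool" where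
  "finite_schmidt_rank \<psi> \<longleftrightarrow>
     (\<exists>n (u :: nat \<Rightarrow> vec) (v :: nat \<Rightarrow> vec).
        (\<forall>k<n. u k \<in> l2 \<and> v k \<in> l2) \<and>
        \<psi> = (\<lambda>(i, j). \<Sum>k<n. u k i * v k j))"

definition produced_by ::
  "nat \<Rightarrow> nat \<Rightarrow> (nat \<Rightarrow> nat \<Rightarrow> nat \<Rightarrow> nat \<Rightarrow> real) \<Rightarrow>
   (nat \<times> nat \<Rightarrow> complex) \<Rightarrow> (nat \<Rightarrow> nat \<Rightarrow> op) \<Rightarrow> (nat \<Rightarrow> nat \<Rightarrow> op) \<Rightarrow> bool" where
  "produced_by ka kb p \<psi> A B \<longleftrightarrow>
     is_state \<psi> \<and> (\<forall>x. is_PVM ka (A x)) \<and> (\<forall>y. is_PVM kb (B y)) \<and>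
     (\<forall>a b x y. p a b x y =
        (if a < ka \<and> b < kb then Re (ip \<psi> (tens_apply (A x a) (B y b) \<psi>)) else 0))"

definition C_qs :: "nat \<Rightarrow> nat \<Rightarrow> (nat \<Rightarrow> nat \<Rightarrow> nat \<Rightarrow> nat \<Rightarrow> real) set" where
  "C_qs ka kb = {p. \<exists>\<psi> A B. produced_by ka kb p \<psi> A B}"

definition C_q :: "nat \<Rightarrow> nat \<Rightarrow> (nat \<Rightarrow> nat \<Rightarrow> nat \<Rightarrow> nat \<Rightarrow> real) set" where
  "C_q ka kb = {p. \<exists>\<psi> A B. produced_by ka kb p \<psi> A B \<and> finite_schmidt_rank \<psi>}"

end

theory Submission
  imports Defs "HOL-Library.Function_Algebras"
begin


lemma l2_iff: "f \<in> l2 \<longleftrightarrow> (\<lambda>i. (cmod (f i))\<^sup>2) summable_on UNIV"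
  by (simp add: l2_def)

lemma l2_zero: "(\<lambda>i. 0) \<in> l2"
  by (simp add: l2_def)

lemma l2_add:
  assumes "f \<in> l2" "g \<in> l2" shows "(\<lambda>i. f i + g i) \<in> l2"
proof -
  have s: "(\<lambda>i. 2 * (cmod (f i))\<^sup>2 + 2 * (cmod (g i))\<^sup>2) summable_on UNIV"
    using assms unfolding l2_def
    by (intro summable_on_add summable_on_cmult_right) auto
  have "(cmod (f i + g i))\<^sup>2 \<le> 2 * (cmod (f i))\<^sup>2 + 2 * (cmod (g i))\<^sup>2" for i
  proof -
    have "cmod (f i + g i) \<le> cmod (f i) + cmod (g i)" by (rule norm_triangle_ineq)
    hence "(cmod (f i + g i))\<^sup>2 \<le> (cmod (f i) + cmod (g i))\<^sup>2"
      by (simp add: power_mono)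
    also have "\<dots> \<le> 2 * (cmod (f i))\<^sup>2 + 2 * (cmod (g i))\<^sup>2"
      using sum_squares_bound[of "cmod (f i)" "cmod (g i)"] by (simp add: power2_sum)
    finally show ?thesis .
  qed
  then show ?thesis unfolding l2_def mem_Collect_eq
    by (intro summable_on_comparison_test[OF s]) auto
qed

lemma l2_scale:
  assumes "f \<in> l2" shows "(\<lambda>i. c * f i) \<in> l2"
proof -
  have "(\<lambda>i. (cmod c)\<^sup>2 * (cmod (f i))\<^sup>2) summable_on UNIV"
    using assms unfolding l2_def by (intro summable_on_cmult_right) auto
  then show ?thesis unfolding l2_def by (simp add: norm_mult power_mult_distrib)
qed

lemma l2_sum:
  assumes "finite K" "\<forall>k\<in>K. f k \<in> l2"
  shows "(\<lambda>i. \<Sum>k\<in>K. c k * f k i) \<in> l2"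
  using assms
proof (induction K rule: finite_induct)
  case empty then show ?case by (simp add: l2_zero)
next
  case (insert a K)
  then show ?case using l2_add[OF l2_scale[of "f a" "c a"], of "\<lambda>i. \<Sum>k\<in>K. c k * f k i"]
    by simp
qed

lemma ip_abs_summable:
  assumes "f \<in> l2" "g \<in> l2"
  shows "(\<lambda>i. norm (cnj (f i) * g i)) summable_on UNIV"
proof -
  have s: "(\<lambda>i. (cmod (f i))\<^sup>2 + (cmod (g i))\<^sup>2) summable_on UNIV"
    using assms unfolding l2_def by (intro summable_on_add) auto
  have "norm (cnj (f i) * g i) \<le> (cmod (f i))\<^sup>2 + (cmod (g i))\<^sup>2" for i
  proof -
    have "cmod (f i) * cmod (g i) \<le> 2 * cmod (f i) * cmod (g i)" by simp
    also have "\<dots> \<le> (cmod (f i))\<^sup>2 + (cmod (g i))\<^sup>2" by (rule sum_squares_bound)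
    finally show ?thesis by (simp add: norm_mult)
  qed
  then show ?thesis
    by (intro summable_on_comparison_test[OF s]) auto
qed

lemma ip_summable:
  assumes "f \<in> l2" "g \<in> l2"
  shows "(\<lambda>i. cnj (f i) * g i) summable_on UNIV"
  by (rule Infinite_Sum.abs_summable_summable) (use ip_abs_summable[OF assms] in simp)

lemma op_sum:
  assumes T: "is_bounded_op T" and "finite K" "\<forall>k\<in>K. f k \<in> l2"
  shows "T (\<lambda>i. \<Sum>k\<in>K. c k * f k i) = (\<lambda>i. \<Sum>k\<in>K. c k * T (f k) i)"
  using assms(2,3)
proof (induction K rule: finite_induct)
  case empty
  have H: "\<forall>f\<in>l2. \<forall>c. T (\<lambda>i. c * f i) = (\<lambda>i. c * T f i)"
    using T unfolding is_bounded_op_def by blast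
  show ?case using H[rule_format, OF l2_zero, of 0] by simp
next
  case (insert a K)
  have l1: "(\<lambda>i. c a * f a i) \<in> l2" using insert l2_scale by auto
  have l3: "(\<lambda>i. \<Sum>k\<in>K. c k * f k i) \<in> l2" using insert l2_sum by auto
  have "T (\<lambda>i. \<Sum>k\<in>insert a K. c k * f k i) = T (\<lambda>i. (\<lambda>i. c a * f a i) i + (\<lambda>i. \<Sum>k\<in>K. c k * f k i) i)"
    using insert by simp
  also have "\<dots> = (\<lambda>i. T (\<lambda>i. c a * f a i) i + T (\<lambda>i. \<Sum>k\<in>K. c k * f k i) i)"
  proof -
    have H2: "\<forall>f\<in>l2. \<forall>g\<in>l2. T (\<lambda>i. f i + g i) = (\<lambda>i. T f i + T g i)"
      using T unfolding is_bounded_op_def by blast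
    show ?thesis using H2[rule_format, OF l1 l3] by simp
  qed
  also have "T (\<lambda>i. c a * f a i) = (\<lambda>i. c a * T (f a) i)"
    using T insert unfolding is_bounded_op_def by blast
  finally show ?case using insert by simp
qed

lemma tens_formula:
  fixes n :: nat and u v :: "nat \<Rightarrow> vec"
  assumes A: "is_bounded_op A" and B: "is_bounded_op B"
    and l: "\<forall>k<n. u k \<in> l2 \<and> v k \<in> l2"
  shows "tens_apply A B (\<lambda>(i, j). \<Sum>k<n. u k i * v k j)
       = (\<lambda>(i, j). \<Sum>k<n. A (u k) i * B (v k) j)"
proof -
  have "B (\<lambda>j'. \<Sum>k<n. u k i' * v k j') = (\<lambda>j. \<Sum>k<n. u k i' * B (v k) j)" for i'
    using op_sum[OF B finite_lessThan[of n], where f=v and c="\<lambda>k. u k i'"] l by auto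
  moreover have "A (\<lambda>i'. \<Sum>k<n. B (v k) j * u k i') = (\<lambda>i. \<Sum>k<n. B (v k) j * A (u k) i)" for j
    using op_sum[OF A finite_lessThan[of n], where f=u and c="\<lambda>k. B (v k) j"] l by auto
  ultimately show ?thesis
    unfolding tens_apply_def by (auto simp: mult.commute)
qed

lemma infsum_sum_fin:
  fixes F :: "'k \<Rightarrow> 'x \<Rightarrow> complex"
  assumes "finite K" "\<forall>k\<in>K. F k summable_on A"
  shows "(\<lambda>x. \<Sum>k\<in>K. F k x) summable_on A \<and> infsum (\<lambda>x. \<Sum>k\<in>K. F k x) A = (\<Sum>k\<in>K. infsum (F k) A)"
  using assms
proof (induction K rule: finite_induct)
  case empty then show ?case by simp
next
  case (insert a K)
  then have s1: "F a summable_on A" and s2: "(\<lambda>x. \<Sum>k\<in>K. F k x) summable_on A"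
    and e: "infsum (\<lambda>x. \<Sum>k\<in>K. F k x) A = (\<Sum>k\<in>K. infsum (F k) A)" by auto
  show ?case using insert(1,2) summable_on_add[OF s1 s2] infsum_add[OF s1 s2] e by simp
qed

lemma prod_infsum:
  fixes a b :: "nat \<Rightarrow> complex"
  assumes ha: "(\<lambda>i. norm (a i)) summable_on UNIV" and hb: "(\<lambda>i. norm (b i)) summable_on UNIV"
  shows "(\<lambda>(i,j). a i * b j) summable_on UNIV \<and>
         infsum (\<lambda>(i,j). a i * b j) UNIV = infsum a UNIV * infsum b UNIV"
proof -
  define S where "S = infsum (\<lambda>j. norm (b j)) UNIV"
  have S0: "S \<ge> 0" unfolding S_def by (simp add: infsum_nonneg)
  have inner: "(\<lambda>j. norm (a i * b j)) summable_on UNIV" for i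
    unfolding norm_mult by (intro summable_on_cmult_right hb)
  have inner_eq: "infsum (\<lambda>j. norm (a i * b j)) UNIV = norm (a i) * S" for i
    unfolding norm_mult S_def by (rule infsum_cmult_right[OF hb])
  have o1: "(\<lambda>i. norm (a i) * S) summable_on UNIV"
    by (intro summable_on_cmult_left ha)
  have o2: "norm (infsum (\<lambda>j. norm (a i * b j)) UNIV) = norm (a i) * S" for i
    unfolding inner_eq using S0 by (simp add: abs_mult)
  have outer: "(\<lambda>i. norm (infsum (\<lambda>j. norm (a i * b j)) UNIV)) summable_on UNIV"
    unfolding o2 by (rule o1)
  let ?f = "\<lambda>p::nat\<times>nat. a (fst p) * b (snd p)"
  have E: "(\<lambda>p. norm (?f p)) summable_on Sigma UNIV (\<lambda>_. UNIV) \<longleftrightarrow>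
     (\<forall>x\<in>UNIV. (\<lambda>y. norm (a x * b y)) summable_on UNIV) \<and>
     (\<lambda>x. norm (infsum (\<lambda>y. norm (a x * b y)) UNIV)) summable_on UNIV"
    using Infinite_Sum.abs_summable_on_Sigma_iff[where f="?f" and A=UNIV and B="\<lambda>_. UNIV"]
    by (simp only: fst_conv snd_conv)
  have I: "(\<lambda>p. norm (?f p)) summable_on Sigma UNIV (\<lambda>_. UNIV)"
    by (rule E[THEN iffD2], intro conjI ballI inner outer)
  then have I2: "(\<lambda>p. norm (?f p)) summable_on UNIV"
    by (simp only: UNIV_Times_UNIV)
  have sumf: "?f summable_on UNIV"
    by (rule Infinite_Sum.abs_summable_summable) (rule I2)
  have sa: "a summable_on UNIV" by (rule Infinite_Sum.abs_summable_summable) (use ha in simp)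
  have sb: "b summable_on UNIV" by (rule Infinite_Sum.abs_summable_summable) (use hb in simp)
  have fe: "(\<lambda>(i,j). a i * b j) = ?f" by (rule ext) (simp add: case_prod_beta)
  have "infsum (\<lambda>x. infsum (\<lambda>y. a x * b y) UNIV) UNIV = infsum (\<lambda>(x,y). a x * b y) (Sigma UNIV (\<lambda>_. UNIV))"
    by (rule infsum_Sigma'_banach) (use sumf in \<open>simp only: fe UNIV_Times_UNIV\<close>)
  moreover have "infsum (\<lambda>x. infsum (\<lambda>y. a x * b y) UNIV) UNIV = infsum a UNIV * infsum b UNIV"
    unfolding infsum_cmult_right[OF sb] by (rule infsum_cmult_left[OF sa])
  ultimately show ?thesis using sumf by (simp only: fe UNIV_Times_UNIV)
qed

lemma ip_tensor:
  fixes n :: nat and u v f g :: "nat \<Rightarrow> vec"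
  assumes l: "\<forall>k<n. u k \<in> l2 \<and> v k \<in> l2 \<and> f k \<in> l2 \<and> g k \<in> l2"
  shows "ip (\<lambda>(i, j). \<Sum>l<n. u l i * v l j) (\<lambda>(i, j). \<Sum>k<n. f k i * g k j)
       = (\<Sum>p\<in>{..<n}\<times>{..<n}. ip (u (fst p)) (f (snd p)) * ip (v (fst p)) (g (snd p)))"
proof -
  define F where "F p = (\<lambda>(i::nat, j::nat). (cnj (u (fst p) i) * f (snd p) i) * (cnj (v (fst p) j) * g (snd p) j))" for p
  have pt: "cnj ((\<lambda>(i, j). \<Sum>l<n. u l i * v l j) z) * (\<lambda>(i, j). \<Sum>k<n. f k i * g k j) z
            = (\<Sum>p\<in>{..<n}\<times>{..<n}. F p z)" for z
  proof -
    obtain i j where z: "z = (i, j)" by fastforce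
    have "cnj (\<Sum>l<n. u l i * v l j) * (\<Sum>k<n. f k i * g k j)
        = (\<Sum>l<n. \<Sum>k<n. cnj (u l i * v l j) * (f k i * g k j))"
      by (simp add: sum_product)
    also have "\<dots> = (\<Sum>p\<in>{..<n}\<times>{..<n}. F p z)"
      unfolding sum.cartesian_product F_def z by (simp add: algebra_simps case_prod_beta)
    finally show ?thesis using z by simp
  qed
  have summ: "\<forall>p\<in>{..<n}\<times>{..<n}. F p summable_on UNIV \<and>
      infsum (F p) UNIV = ip (u (fst p)) (f (snd p)) * ip (v (fst p)) (g (snd p))"
  proof
    fix p assume p: "p \<in> {..<n}\<times>{..<n}"
    have h1: "(\<lambda>i. norm (cnj (u (fst p) i) * f (snd p) i)) summable_on UNIV"
      using p l by (intro ip_abs_summable) auto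
    have h2: "(\<lambda>i. norm (cnj (v (fst p) i) * g (snd p) i)) summable_on UNIV"
      using p l by (intro ip_abs_summable) auto
    show "F p summable_on UNIV \<and>
      infsum (F p) UNIV = ip (u (fst p)) (f (snd p)) * ip (v (fst p)) (g (snd p))"
      using prod_infsum[OF h1 h2] unfolding F_def ip_def by simp
  qed
  have "ip (\<lambda>(i, j). \<Sum>l<n. u l i * v l j) (\<lambda>(i, j). \<Sum>k<n. f k i * g k j)
     = infsum (\<lambda>z. \<Sum>p\<in>{..<n}\<times>{..<n}. F p z) UNIV"
    unfolding ip_def using pt by simp
  also have "\<dots> = (\<Sum>p\<in>{..<n}\<times>{..<n}. infsum (F p) UNIV)"
    by (rule conjunct2[OF infsum_sum_fin[OF finite_cartesian_product[OF finite_lessThan finite_lessThan]]]) (use summ in blast)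
  also have "\<dots> = (\<Sum>p\<in>{..<n}\<times>{..<n}. ip (u (fst p)) (f (snd p)) * ip (v (fst p)) (g (snd p)))"
    using summ by (intro sum.cong) auto
  finally show ?thesis .
qed



definition rscale :: "real \<Rightarrow> (nat \<times> nat \<Rightarrow> complex) \<Rightarrow> (nat \<times> nat \<Rightarrow> complex)" where
  "rscale r f = (\<lambda>z. of_real r * f z)"

interpretation fv: vector_space rscale
  by unfold_locales (auto simp: rscale_def fun_eq_iff algebra_simps plus_fun_def)

lemma sum_fun_app:
  fixes g :: "'k \<Rightarrow> 'a \<Rightarrow> 'b::comm_monoid_add"
  shows "(\<Sum>a\<in>A. g a) w = (\<Sum>a\<in>A. g a w)"
proof (cases "finite A")
  case True then show ?thesis
    by (induction A rule: finite_induct) (auto simp: plus_fun_def zero_fun_def)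
next
  case False then show ?thesis by (simp add: zero_fun_def)
qed

lemma fin_dim_contra:
  fixes M N :: "nat \<Rightarrow> nat \<times> nat \<Rightarrow> complex" and c :: "nat \<Rightarrow> real"
    and D :: "(nat \<times> nat) set"
  assumes fD: "finite D"
    and pair: "\<And>x y. Re (\<Sum>z\<in>D. M x z * N y z) = (if x = y then c x else 0)"
    and cnz: "\<And>x. c x \<noteq> 0"
  shows False
proof -
  define V where "V x = (\<lambda>z. if z \<in> D then M x z else 0)" for x
  define L where "L x f = Re (\<Sum>z\<in>D. f z * N x z)" for x and f :: "nat \<times> nat \<Rightarrow> complex"
  have LV: "L y (V x) = (if x = y then c x else 0)" for x y
  proof -
    have "(\<Sum>z\<in>D. V x z * N y z) = (\<Sum>z\<in>D. M x z * N y z)"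
      unfolding V_def by (intro sum.cong) auto
    then show ?thesis unfolding L_def using pair by simp
  qed
  have Llin: "L y (\<Sum>v\<in>S. rscale (u v) v) = (\<Sum>v\<in>S. u v * L y v)" if "finite S" for y S u
  proof -
    have "(\<Sum>z\<in>D. (\<Sum>v\<in>S. rscale (u v) v) z * N y z) = (\<Sum>z\<in>D. \<Sum>v\<in>S. of_real (u v) * (v z * N y z))"
      unfolding sum_fun_app rscale_def by (simp add: sum_distrib_right mult.assoc)
    also have "\<dots> = (\<Sum>v\<in>S. of_real (u v) * (\<Sum>z\<in>D. v z * N y z))"
      by (subst sum.swap) (simp add: sum_distrib_left)
    finally show ?thesis unfolding L_def by (simp add: Re_sum)
  qed
  have injV: "inj V"
  proof (rule injI)
    fix x y assume "V x = V y"
    then have e1: "L x (V x) = L x (V y)" by simp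
    show "x = y"
    proof (rule ccontr)
      assume ne: "x \<noteq> y"
      have "L x (V y) = 0" using LV[where x=y and y=x] ne by simp
      moreover have "L x (V x) = c x" using LV[where x=x and y=x] by simp
      ultimately show False using e1 cnz[of x] by simp
    qed
  qed
  define K where "K = 2 * card D"
  define S where "S = V ` {..K}"
  have fS: "finite S" unfolding S_def by simp
  have cardS: "card S = K + 1" unfolding S_def using injV
    by (simp add: card_image inj_on_subset)
  have indS: "fv.independent S"
  proof (rule fv.independent_if_scalars_zero[OF fS])
    fix f v assume h: "(\<Sum>x\<in>S. rscale (f x) x) = 0" and v: "v \<in> S"
    then obtain x where vx: "v = V x" unfolding S_def by auto
    have "L x (\<Sum>w\<in>S. rscale (f w) w) = 0" using h by (simp add: L_def zero_fun_def)
    moreover have "L x (\<Sum>w\<in>S. rscale (f w) w) = (\<Sum>w\<in>S. f w * L x w)" by (rule Llin[OF fS])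
    moreover have "(\<Sum>w\<in>S. f w * L x w) = f v * c x"
    proof -
      have "(\<Sum>w\<in>S. f w * L x w) = (\<Sum>w\<in>S. if w = v then f v * c x else 0)"
      proof (intro sum.cong refl)
        fix w assume "w \<in> S"
        then obtain y where wy: "w = V y" unfolding S_def by auto
        show "f w * L x w = (if w = v then f v * c x else 0)"
        proof (cases "w = v")
          case True
          then show ?thesis using LV[where x=x and y=x] vx by simp
        next
          case False
          then have "y \<noteq> x" using vx wy by blast
          then have "L x w = 0" using LV[where x=y and y=x] wy by simp
          then show ?thesis using False by simp
        qed
      qed
      also have "\<dots> = f v * c x" using v fS by simp
      finally show ?thesis .
    qed
    ultimately show "f v = 0" using cnz[of x] by simp
  qed
  define e where "e z = (\<lambda>w::nat\<times>nat. if w = z then (1::complex) else 0)" for z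
  define ie where "ie z = (\<lambda>w::nat\<times>nat. if w = z then \<i> else 0)" for z
  define T where "T = e ` D \<union> ie ` D"
  have fT: "finite T" unfolding T_def using fD by simp
  have cardT: "card T \<le> K" unfolding T_def K_def
    using card_Un_le[of "e ` D" "ie ` D"] card_image_le[OF fD, of e] card_image_le[OF fD, of ie] by linarith
  have spanS: "S \<subseteq> fv.span T"
  proof
    fix v assume "v \<in> S"
    then obtain x where vx: "v = V x" unfolding S_def by auto
    have eq: "V x = (\<Sum>z\<in>D. rscale (Re (M x z)) (e z) + rscale (Im (M x z)) (ie z))"
    proof (rule ext)
      fix w
      have "(\<Sum>z\<in>D. rscale (Re (M x z)) (e z) + rscale (Im (M x z)) (ie z)) w
          = (\<Sum>z\<in>D. if w = z then M x z else 0)"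
        unfolding sum_fun_app
        by (intro sum.cong refl) (auto simp: plus_fun_def rscale_def e_def ie_def complex_eq_iff)
      also have "\<dots> = V x w" unfolding V_def using fD by (simp add: sum.delta)
      finally show "V x w = (\<Sum>z\<in>D. rscale (Re (M x z)) (e z) + rscale (Im (M x z)) (ie z)) w" by simp
    qed
    have "(\<Sum>z\<in>D. rscale (Re (M x z)) (e z) + rscale (Im (M x z)) (ie z)) \<in> fv.span T"
      by (intro fv.span_sum fv.span_add fv.span_scale fv.span_base) (auto simp: T_def)
    then show "v \<in> fv.span T" using vx eq by simp
  qed
  have "card S \<le> card T" using fv.independent_span_bound[OF fT indS spanS] by simp
  then show False using cardS cardT by simp
qed



definition mask :: "nat set \<Rightarrow> op" where
  "mask S f = (\<lambda>i. if i \<in> S then f i else 0)"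

lemma mask_l2: "f \<in> l2 \<Longrightarrow> mask S f \<in> l2"
  unfolding l2_def mem_Collect_eq mask_def
  by (erule summable_on_comparison_test) auto

lemma mask_proj: "is_projection (mask S)"
proof -
  have b: "sqnorm (mask S f) \<le> 1 * sqnorm f" if f: "f \<in> l2" for f
  proof -
    have "sqnorm (mask S f) \<le> sqnorm f"
      unfolding sqnorm_def
      by (rule infsum_mono) (use mask_l2[OF f] f in \<open>auto simp: l2_def mask_def\<close>)
    then show ?thesis by simp
  qed
  have "is_bounded_op (mask S)"
  proof -
    have "\<exists>C. \<forall>f\<in>l2. sqnorm (mask S f) \<le> C * sqnorm f" using b by blast
    then show ?thesis unfolding is_bounded_op_def using mask_l2 by (auto simp: mask_def fun_eq_iff)
  qed
  moreover have "ip (mask S f) g = ip f (mask S g)" for f g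
    unfolding ip_def mask_def by (intro infsum_cong) auto
  ultimately show ?thesis unfolding is_projection_def by (auto simp: mask_def)
qed

definition Aop :: "nat \<Rightarrow> nat \<Rightarrow> op" where
  "Aop x a = (if a = 0 then mask (- {x}) else if a = 1 then mask {x} else mask {})"

lemma Aop_PVM: "is_PVM k (Aop x)" if "k \<le> 4" "k \<ge> 2"
proof -
  have "(\<Sum>a<k. Aop x a f i) = f i" for f i
  proof -
    have "(\<Sum>a<k. Aop x a f i) = (\<Sum>a<2. Aop x a f i) + (\<Sum>a=2..<k. Aop x a f i)"
      using that by (metis atLeast0LessThan sum.atLeastLessThan_concat zero_le)
    also have "(\<Sum>a=2..<k. Aop x a f i) = 0"
      by (intro sum.neutral) (auto simp: Aop_def mask_def)
    also have "(\<Sum>a<2. Aop x a f i) = f i"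
      by (simp add: eval_nat_numeral Aop_def mask_def)
    finally show ?thesis by simp
  qed
  then show ?thesis unfolding is_PVM_def by (auto simp: Aop_def mask_proj)
qed

definition q :: "nat \<Rightarrow> real" where "q i = (1/2) ^ Suc i"

lemma q_pos: "q i > 0" by (simp add: q_def)

lemma q_has_sum: "(q has_sum 1) UNIV"
proof -
  have "(\<lambda>n. (1/2::real) ^ n) sums (1 / (1 - 1/2))" by (rule geometric_sums) simp
  then have "(\<lambda>n. (1/2) * (1/2::real) ^ n) sums ((1/2) * (1 / (1 - 1/2)))" by (rule sums_mult)
  moreover have "q = (\<lambda>n. (1/2) * (1/2::real) ^ n)" by (simp add: q_def fun_eq_iff)
  ultimately have "q sums 1" by simp
  then show ?thesis by (rule sums_nonneg_imp_has_sum) (simp add: q_def)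
qed

definition psi :: "nat \<times> nat \<Rightarrow> complex" where
  "psi z = (if fst z = snd z then of_real (sqrt (q (fst z))) else 0)"

lemma psi_sq: "(cmod (psi z))\<^sup>2 = (if fst z = snd z then q (fst z) else 0)"
  using q_pos by (auto simp: psi_def less_imp_le)

lemma psi_has_sum: "((\<lambda>z. (cmod (psi z))\<^sup>2) has_sum 1) UNIV"
proof -
  let ?g = "\<lambda>z. (cmod (psi z))\<^sup>2"
  have inj: "inj_on (\<lambda>i. (i, i)) UNIV" by (auto simp: inj_on_def)
  have "(?g \<circ> (\<lambda>i. (i, i))) = q" by (auto simp: psi_sq fun_eq_iff)
  then have "(?g has_sum 1) (range (\<lambda>i. (i, i)))"
    using has_sum_reindex[OF inj, of ?g 1] q_has_sum by simp
  moreover have "(?g has_sum 1) (range (\<lambda>i. (i, i))) \<longleftrightarrow> (?g has_sum 1) UNIV"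
    by (rule has_sum_cong_neutral) (auto simp: psi_sq)
  ultimately show ?thesis by simp
qed

lemma psi_state: "is_state psi"
  unfolding is_state_def l2_def sqnorm_def
  using psi_has_sum by (auto simp: summable_on_def intro: infsumI)

definition pcorr :: "nat \<Rightarrow> nat \<Rightarrow> nat \<Rightarrow> nat \<Rightarrow> real" where
  "pcorr a b x y = (if a < 4 \<and> b < 3 then Re (ip psi (tens_apply (Aop x a) (Aop y b) psi)) else 0)"

lemma pcorr_qs: "produced_by 4 3 pcorr psi Aop Aop"
  unfolding produced_by_def using psi_state Aop_PVM by (auto simp: pcorr_def)

lemma pcorr_11: "pcorr 1 1 x y = (if x = y then q x else 0)"
proof -
  have t: "tens_apply (Aop x 1) (Aop y 1) psi = (\<lambda>z. if z = (x, y) then psi z else 0)"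
    by (auto simp: tens_apply_def Aop_def mask_def fun_eq_iff)
  have "ip psi (\<lambda>z. if z = (x, y) then psi z else 0) = infsum (\<lambda>z. cnj (psi z) * psi z) {(x, y)}"
    unfolding ip_def by (rule infsum_cong_neutral) auto
  also have "\<dots> = cnj (psi (x, y)) * psi (x, y)" by simp
  also have "\<dots> = of_real ((cmod (psi (x, y)))\<^sup>2)"
    by (subst complex_norm_square) (simp add: mult.commute)
  finally show ?thesis unfolding pcorr_def t by (simp add: psi_sq)
qed

theorem corollary2:
  shows "C_q 4 3 \<noteq> C_qs 4 3"
proof
  assume eq: "C_q 4 3 = C_qs 4 3"
  have "pcorr \<in> C_qs 4 3" unfolding C_qs_def using pcorr_qs by blast
  then have "pcorr \<in> C_q 4 3" using eq by simp
  then obtain \<psi> A B where pb: "produced_by 4 3 pcorr \<psi> A B" and fr: "finite_schmidt_rank \<psi>"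
    unfolding C_q_def by blast
  from fr obtain n :: nat and u v :: "nat \<Rightarrow> vec" where l: "\<forall>k<n. u k \<in> l2 \<and> v k \<in> l2"
    and \<psi>: "\<psi> = (\<lambda>(i, j). \<Sum>k<n. u k i * v k j)"
    unfolding finite_schmidt_rank_def by blast
  have Ab: "is_bounded_op (A x 1)" for x
    using pb unfolding produced_by_def is_PVM_def is_projection_def by auto
  have Bb: "is_bounded_op (B y 1)" for y
    using pb unfolding produced_by_def is_PVM_def is_projection_def by auto
  define M where "M x z = ip (u (fst z)) (A x 1 (u (snd z)))" for x z
  define N where "N y z = ip (v (fst z)) (B y 1 (v (snd z)))" for y z
  have key: "Re (\<Sum>z\<in>{..<n}\<times>{..<n}. M x z * N y z) = (if x = y then q x else 0)" for x y
  proof -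
    have l2': "\<forall>k<n. u k \<in> l2 \<and> v k \<in> l2 \<and> A x 1 (u k) \<in> l2 \<and> B y 1 (v k) \<in> l2"
      using l Ab[of x] Bb[of y] unfolding is_bounded_op_def by blast
    have "pcorr 1 1 x y = Re (ip \<psi> (tens_apply (A x 1) (B y 1) \<psi>))"
      using pb unfolding produced_by_def by simp
    also have "tens_apply (A x 1) (B y 1) \<psi> = (\<lambda>(i, j). \<Sum>k<n. A x 1 (u k) i * B y 1 (v k) j)"
      unfolding \<psi> by (rule tens_formula[OF Ab Bb l])
    also have "ip \<psi> \<dots> = (\<Sum>z\<in>{..<n}\<times>{..<n}. M x z * N y z)"
      unfolding \<psi> M_def N_def by (rule ip_tensor[OF l2'])
    finally show ?thesis using pcorr_11 by simp
  qed
  show False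
    by (rule fin_dim_contra[of "{..<n}\<times>{..<n}" M N q]) (use key q_pos in \<open>auto simp: less_le\<close>)
qed

end
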